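(* Let $N\ge2$, $M\ge2$ and $Q$ be integers with $1\le Q\le M-1$, write $\mathcal{M}=\{1,\dots,M\}$, let $0<\epsilon<1$, and let $\mathbf{H}_1,\dots,\mathbf{H}_M$ be $N\times N$ complex Hermitian positive semidefinite matrices. Let $v^{\max}_{\rm QP}$ be the optimal value of (P2): maximize $\|\mathbf{w}\|^2$ over $\mathbf{w}\in\mathbb{C}^N$, $\boldsymbol\beta\in\{0,1\}^M$ subject to $\mathbf{w}^H\mathbf{H}_i\mathbf{w}\le\beta_i\epsilon+(1-\beta_i)$ ($i\in\mathcal{M}$) and $\sum_i\beta_i=Q$; and let $v^{\max}_{\rm SDP}$ be the optimal value of (SDP3): maximize $\mathrm{Tr}[\mathbf{X}]$ over Hermitian $N\times N$ matrices $\mathbf{X}\succeq0$ and $\boldsymbol\beta\in\mathbb{R}^M$ subject to $\mathrm{Tr}[\mathbf{H}_i\mathbf{X}]\le\beta_i\epsilon+(1-\beta_i)$ ($i\in\mathcal{M}$), $\sum_i\beta_i=Q$, $0\le\beta_i\le1$. Then $$v^{\max}_{\rm QP}\ge\frac{\epsilon}{\tilde c(\epsilon)}\cdot\frac{1}{4\ln(100K)}\,v^{\max}_{\rm SDP},$$ where $K=\sum_{i=1}^M\min\{\mathrm{rank}(\mathbf{H}_i),\sqrt{M}\}$ and $\tilde c(\epsilon)=1-\frac{1-\epsilon}{M-Q+1}$.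
   Context: ${}^H$ denotes conjugate transpose. *)

theory Defs
  imports "HOL-Analysis.Analysis"
begin

text \<open>Complex N x N matrices are represented as complex^'n^'n with N = CARD('n).\<close>

definition cmat_adj :: "complex^'n^'n \<Rightarrow> complex^'n^'n" where
  "cmat_adj X = (\<chi> i j. cnj (X $ j $ i))"

definition hermitian_mat :: "complex^'n^'n \<Rightarrow> bool" where
  "hermitian_mat X \<longleftrightarrow> cmat_adj X = X"

text \<open>Quadratic form w^H X w.\<close>
definition qform :: "complex^'n^'n \<Rightarrow> complex^'n \<Rightarrow> complex" where
  "qform X w = (\<Sum>i\<in>UNIV. cnj (w $ i) * (X *v w) $ i)"

definition psd_mat :: "complex^'n^'n \<Rightarrow> bool" where
  "psd_mat X \<longleftrightarrow> hermitian_mat X \<and> (\<forall>w. Im (qform X w) = 0 \<and> 0 \<le> Re (qform X w))"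

definition ctrace :: "complex^'n^'n \<Rightarrow> complex" where
  "ctrace X = (\<Sum>i\<in>UNIV. X $ i $ i)"

text \<open>Optimal value of (P2), as an extended real (supremum over the feasible set).\<close>
definition v_QP :: "nat \<Rightarrow> nat \<Rightarrow> real \<Rightarrow> (nat \<Rightarrow> complex^'n^'n) \<Rightarrow> ereal" where
  "v_QP M Q \<epsilon> H = (SUP p \<in> {(w :: complex^'n, \<beta> :: nat \<Rightarrow> real).
        (\<forall>i\<in>{1..M}. \<beta> i \<in> {0, 1}) \<and>
        (\<forall>i\<in>{1..M}. Re (qform (H i) w) \<le> \<beta> i * \<epsilon> + (1 - \<beta> i)) \<and>
        (\<Sum>i=1..M. \<beta> i) = real Q}.
      ereal ((norm (fst p))\<^sup>2))"

text \<open>Optimal value of (SDP3), as an extended real.\<close>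
definition v_SDP :: "nat \<Rightarrow> nat \<Rightarrow> real \<Rightarrow> (nat \<Rightarrow> complex^'n^'n) \<Rightarrow> ereal" where
  "v_SDP M Q \<epsilon> H = (SUP p \<in> {(X :: complex^'n^'n, \<beta> :: nat \<Rightarrow> real).
        psd_mat X \<and>
        (\<forall>i\<in>{1..M}. Re (ctrace (H i ** X)) \<le> \<beta> i * \<epsilon> + (1 - \<beta> i)) \<and>
        (\<Sum>i=1..M. \<beta> i) = real Q \<and>
        (\<forall>i\<in>{1..M}. 0 \<le> \<beta> i \<and> \<beta> i \<le> 1)}.
      ereal (Re (ctrace (fst p))))"

end

theory Submission
  imports Defs "HOL-Probability.Hoeffding"
begin

lemma cosh_le_exp_sq: "(exp (a::real) + exp (-a)) / 2 \<le> exp (a^2/2)"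
proof -
  have key: "(exp (b::real) + exp (-b)) / 2 \<le> exp (b^2/2)" if "b \<ge> 0" for b
  proof -
    have "-(2*b) * (1/2) + ln (1 + (1/2) * (exp (2*b) - 1)) \<le> (2*b)^2/8"
      using Hoeffdings_lemma_aux[of "2*b" "1/2"] that by simp
    hence "ln ((1 + exp (2*b))/2) \<le> b + b^2/2"
      by (simp add: power2_eq_square field_simps)
    hence "(1 + exp (2*b))/2 \<le> exp (b + b^2/2)"
      by (smt (verit) exp_gt_zero exp_le_cancel_iff exp_ln)
    hence "(1 + exp (2*b))/2 * exp (-b) \<le> exp (b + b^2/2) * exp (-b)"
      by (intro mult_right_mono) auto
    moreover have "(1 + exp (2*b))/2 * exp (-b) = (exp b + exp (-b))/2"
      by (simp add: field_simps flip: exp_add)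
    moreover have "exp (b + b^2/2) * exp (-b) = exp (b^2/2)"
      by (simp flip: exp_add)
    ultimately show ?thesis by simp
  qed
  show ?thesis
  proof (cases "a \<ge> 0")
    case True thus ?thesis using key by blast
  next
    case False thus ?thesis using key[of "-a"] by (simp add: add.commute)
  qed
qed

definition SS :: "nat \<Rightarrow> (nat \<Rightarrow> real) set" where
  "SS m = PiE {..<m} (\<lambda>_. {-1, 1})"

lemma SS_finite: "finite (SS m)"
  unfolding SS_def by (intro finite_PiE) auto

lemma SS_card: "card (SS m) = 2^m"
proof -
  have "card {-1, 1::real} = 2" by simp
  thus ?thesis unfolding SS_def by (simp add: card_PiE del: insert_iff)
qed

lemma SS_sq: "s \<in> SS m \<Longrightarrow> j < m \<Longrightarrow> (s j)^2 = 1"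
  unfolding SS_def by (auto simp: PiE_def Pi_def)

lemma mgf_bound:
  "(\<Sum>s\<in>SS m. exp (\<Sum>j<m. a j * s j)) \<le> 2^m * exp ((\<Sum>j<m. (a j)^2)/2)"
proof -
  have "(\<Sum>s\<in>SS m. exp (\<Sum>j<m. a j * s j)) = (\<Sum>s\<in>SS m. \<Prod>j<m. exp (a j * s j))"
    by (simp add: exp_sum)
  also have "\<dots> = (\<Prod>j<m. \<Sum>y\<in>{-1,1::real}. exp (a j * y))"
    unfolding SS_def by (rule prod_sum_PiE[symmetric]) auto
  also have "\<dots> = (\<Prod>j<m. 2 * ((exp (a j) + exp (- a j))/2))"
    by (intro prod.cong) auto
  also have "\<dots> \<le> (\<Prod>j<m. 2 * exp ((a j)^2/2))"
  proof (intro prod_mono conjI)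
    fix j show "0 \<le> 2 * ((exp (a j) + exp (- a j)) / 2)" by (intro mult_nonneg_nonneg add_nonneg_nonneg) auto
    show "2 * ((exp (a j) + exp (- a j)) / 2) \<le> 2 * exp ((a j)^2 / 2)"
      using cosh_le_exp_sq[of "a j"] by linarith
  qed
  also have "\<dots> = 2^m * exp ((\<Sum>j<m. (a j)^2)/2)"
    by (simp add: prod.distrib exp_sum sum_divide_distrib)
  finally show ?thesis .
qed

lemma tail_bound:
  assumes "y \<ge> 0" "(\<Sum>j<m. (a j)^2) > 0"
  shows "real (card {s\<in>SS m. (\<Sum>j<m. a j * s j) \<ge> y}) \<le> 2^m * exp (-(y^2) / (2 * (\<Sum>j<m. (a j)^2)))"
proof -
  define v where "v = (\<Sum>j<m. (a j)^2)"
  define th where "th = y / v"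
  have v: "v > 0" using assms v_def by simp
  have th: "th \<ge> 0" using assms v by (simp add: th_def)
  have "real (card {s\<in>SS m. (\<Sum>j<m. a j * s j) \<ge> y}) = (\<Sum>s\<in>{s\<in>SS m. (\<Sum>j<m. a j * s j) \<ge> y}. 1)"
    by simp
  also have "\<dots> \<le> (\<Sum>s\<in>{s\<in>SS m. (\<Sum>j<m. a j * s j) \<ge> y}. exp (th * (\<Sum>j<m. a j * s j) - th * y))"
    by (intro sum_mono) (auto intro!: mult_left_mono th simp: algebra_simps)
  also have "\<dots> \<le> (\<Sum>s\<in>SS m. exp (th * (\<Sum>j<m. a j * s j) - th * y))"
    by (intro sum_mono2 SS_finite) auto
  also have "\<dots> = exp (- th * y) * (\<Sum>s\<in>SS m. exp (\<Sum>j<m. (th * a j) * s j))"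
    by (simp add: sum_distrib_left sum_distrib_right mult.assoc flip: exp_add)
  also have "\<dots> \<le> exp (- th * y) * (2^m * exp ((\<Sum>j<m. (th * a j)^2)/2))"
    by (intro mult_left_mono mgf_bound) auto
  also have "(\<Sum>j<m. (th * a j)^2) = th^2 * v"
    by (simp add: v_def power_mult_distrib sum_distrib_left)
  also have "exp (- th * y) * (2^m * exp (th^2 * v/2)) = 2^m * exp (-(y^2) / (2 * v))"
    using v by (simp add: th_def power2_eq_square field_simps flip: exp_add)
  finally show ?thesis by (simp add: v_def)
qed

lemma ctail_bound:
  fixes c :: "nat \<Rightarrow> complex"
  assumes "(\<Sum>j<m. (cmod (c j))^2) = 1" "x \<ge> 0"
  shows "real (card {s\<in>SS m. (cmod (\<Sum>j<m. complex_of_real (s j) * c j))^2 \<ge> x}) \<le> 4 * 2^m * exp (-x/2)"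
proof -
  define X where "X s = (\<Sum>j<m. Re (c j) * s j)" for s
  define W where "W s = (\<Sum>j<m. Im (c j) * s j)" for s
  define p where "p = (\<Sum>j<m. (Re (c j))^2)"
  define q where "q = (\<Sum>j<m. (Im (c j))^2)"
  have pq: "p + q = 1" using assms(1) by (simp add: p_def q_def cmod_power2 sum.distrib)
  have p0: "p \<ge> 0" "q \<ge> 0" by (auto simp: p_def q_def intro: sum_nonneg)
  have Z: "(cmod (\<Sum>j<m. complex_of_real (s j) * c j))^2 = (X s)^2 + (W s)^2" for s
    by (simp add: cmod_power2 X_def W_def Re_sum Im_sum mult.commute)
  have Xz: "p = 0 \<Longrightarrow> X s = 0" for s
  proof -
    assume "p = 0"
    hence "\<forall>j\<in>{..<m}. (Re (c j))^2 = 0" unfolding p_def by (subst (asm) sum_nonneg_eq_0_iff) auto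
    thus ?thesis by (simp add: X_def)
  qed
  have Wz: "q = 0 \<Longrightarrow> W s = 0" for s
  proof -
    assume "q = 0"
    hence "\<forall>j\<in>{..<m}. (Im (c j))^2 = 0" unfolding q_def by (subst (asm) sum_nonneg_eq_0_iff) auto
    thus ?thesis by (simp add: W_def)
  qed
  define A1 where "A1 = {s\<in>SS m. p > 0 \<and> (\<Sum>j<m. Re (c j) * s j) \<ge> sqrt (p*x)}"
  define A2 where "A2 = {s\<in>SS m. p > 0 \<and> (\<Sum>j<m. (- Re (c j)) * s j) \<ge> sqrt (p*x)}"
  define A3 where "A3 = {s\<in>SS m. q > 0 \<and> (\<Sum>j<m. Im (c j) * s j) \<ge> sqrt (q*x)}"
  define A4 where "A4 = {s\<in>SS m. q > 0 \<and> (\<Sum>j<m. (- Im (c j)) * s j) \<ge> sqrt (q*x)}"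
  have sub: "{s\<in>SS m. (cmod (\<Sum>j<m. complex_of_real (s j) * c j))^2 \<ge> x} \<subseteq> A1 \<union> A2 \<union> A3 \<union> A4"
  proof
    fix s assume s: "s \<in> {s\<in>SS m. (cmod (\<Sum>j<m. complex_of_real (s j) * c j))^2 \<ge> x}"
    hence sS: "s \<in> SS m" and ge: "(X s)^2 + (W s)^2 \<ge> x" using Z by auto
    have neg: "(\<Sum>j<m. (- a j) * s j) = - (\<Sum>j<m. a j * s j)" for a :: "nat \<Rightarrow> real"
      by (simp add: sum_negf)
    have "(p > 0 \<and> (X s)^2 \<ge> p * x) \<or> (q > 0 \<and> (W s)^2 \<ge> q * x)"
    proof (rule ccontr)
      assume n: "\<not> ?thesis"
      show False
      proof (cases "p = 0")
        case True
        hence "q = 1" using pq by simp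
        thus False using n ge Xz[OF True] by simp
      next
        case False
        hence pp: "p > 0" using p0 by simp
        show False
        proof (cases "q = 0")
          case True
          hence "p = 1" using pq by simp
          thus False using n ge Wz[OF True] by simp
        next
          case False
          hence "q > 0" using p0 by simp
          hence "(X s)^2 + (W s)^2 < p * x + q * x" using n pp by (intro add_strict_mono) auto
          also have "\<dots> = (p + q) * x" by (simp add: algebra_simps)
          also have "\<dots> = x" using pq by simp
          finally show False using ge by simp
        qed
      qed
    qed
    moreover have "sqrt (p*x) \<le> \<bar>X s\<bar>" if "(X s)^2 \<ge> p * x"
      using that by (metis real_sqrt_abs real_sqrt_le_iff)
    moreover have "sqrt (q*x) \<le> \<bar>W s\<bar>" if "(W s)^2 \<ge> q * x"
      using that by (metis real_sqrt_abs real_sqrt_le_iff)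
    ultimately have "(p > 0 \<and> (X s \<ge> sqrt (p*x) \<or> - X s \<ge> sqrt (p*x))) \<or> (q > 0 \<and> (W s \<ge> sqrt (q*x) \<or> - W s \<ge> sqrt (q*x)))"
      by (auto simp: abs_if split: if_splits)
    moreover have "(\<Sum>j<m. (- Re (c j)) * s j) = - X s" "(\<Sum>j<m. (- Im (c j)) * s j) = - W s"
      unfolding X_def W_def by (simp_all add: sum_negf)
    ultimately show "s \<in> A1 \<union> A2 \<union> A3 \<union> A4"
      using sS unfolding A1_def A2_def A3_def A4_def by (auto simp: X_def W_def)
  qed
  have b1: "real (card A1) \<le> 2^m * exp (-x/2)"
  proof (cases "p > 0")
    case True
    have "real (card A1) \<le> 2^m * exp (-((sqrt (p*x))^2) / (2 * p))"
      unfolding A1_def using tail_bound[where y="sqrt (p*x)" and m=m and a="\<lambda>j. Re (c j)"] True p_def assms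
      by (simp add: p_def)
    also have "(sqrt (p*x))^2 = p * x" using True assms by simp
    finally show ?thesis using True by simp
  qed (auto simp: A1_def)
  have b2: "real (card A2) \<le> 2^m * exp (-x/2)"
  proof (cases "p > 0")
    case True
    have "real (card A2) \<le> 2^m * exp (-((sqrt (p*x))^2) / (2 * p))"
      unfolding A2_def using tail_bound[where y="sqrt (p*x)" and m=m and a="\<lambda>j. - Re (c j)"] True p_def assms
      by (simp add: p_def)
    also have "(sqrt (p*x))^2 = p * x" using True assms by simp
    finally show ?thesis using True by simp
  qed (auto simp: A2_def)
  have b3: "real (card A3) \<le> 2^m * exp (-x/2)"
  proof (cases "q > 0")
    case True
    have "real (card A3) \<le> 2^m * exp (-((sqrt (q*x))^2) / (2 * q))"
      unfolding A3_def using tail_bound[where y="sqrt (q*x)" and m=m and a="\<lambda>j. Im (c j)"] True q_def assms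
      by (simp add: q_def)
    also have "(sqrt (q*x))^2 = q * x" using True assms by simp
    finally show ?thesis using True by simp
  qed (auto simp: A3_def)
  have b4: "real (card A4) \<le> 2^m * exp (-x/2)"
  proof (cases "q > 0")
    case True
    have "real (card A4) \<le> 2^m * exp (-((sqrt (q*x))^2) / (2 * q))"
      unfolding A4_def using tail_bound[where y="sqrt (q*x)" and m=m and a="\<lambda>j. - Im (c j)"] True q_def assms
      by (simp add: q_def)
    also have "(sqrt (q*x))^2 = q * x" using True assms by simp
    finally show ?thesis using True by simp
  qed (auto simp: A4_def)
  have fin: "finite A1" "finite A2" "finite A3" "finite A4"
    unfolding A1_def A2_def A3_def A4_def using SS_finite by auto
  have "card {s\<in>SS m. (cmod (\<Sum>j<m. complex_of_real (s j) * c j))^2 \<ge> x} \<le> card (A1 \<union> A2 \<union> A3 \<union> A4)"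
    using sub fin by (intro card_mono) auto
  also have "\<dots> \<le> card A1 + card A2 + card A3 + card A4"
    by (meson card_Un_le add_le_mono le_trans order_refl)
  finally have "real (card {s\<in>SS m. (cmod (\<Sum>j<m. complex_of_real (s j) * c j))^2 \<ge> x}) \<le> real (card A1) + card A2 + card A3 + card A4"
    by linarith
  thus ?thesis using b1 b2 b3 b4 by linarith
qed

lemma exp_quarter_bounds: "exp (1/4::real) \<le> 4/3" "exp (-1/4::real) \<le> 4/5"
proof -
  have e4: "exp (1/4::real) ^ 4 = exp 1"
    by (simp flip: exp_of_nat_mult)
  show "exp (1/4::real) \<le> 4/3"
  proof (rule ccontr)
    assume "\<not> ?thesis"
    hence "(4/3::real)^4 < exp (1/4) ^ 4" by (intro power_strict_mono) auto
    moreover have "(4/3::real)^4 = 256/81" by (simp add: power4_eq_xxxx)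
    ultimately show False using e4 exp_le by simp
  qed
  have "exp (1/4::real) \<ge> 1 + 1/4" by (rule exp_ge_add_one_self)
  hence "1 / exp (1/4::real) \<le> 1 / (5/4)" by (intro divide_left_mono) auto
  thus "exp (-1/4::real) \<le> 4/5" by (simp add: exp_minus field_simps)
qed

lemma cmgf_bound:
  fixes c :: "nat \<Rightarrow> complex"
  assumes "(\<Sum>j<m. (cmod (c j))^2) = 1"
  shows "(\<Sum>s\<in>SS m. exp ((cmod (\<Sum>j<m. complex_of_real (s j) * c j))^2 / 4)) \<le> 27 * 2^m"
proof -
  define Z where "Z s = (cmod (\<Sum>j<m. complex_of_real (s j) * c j))^2" for s
  have SSne: "SS m \<noteq> {}"
  proof -
    have "(\<lambda>j\<in>{..<m}. 1) \<in> SS m" unfolding SS_def by auto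
    thus ?thesis by blast
  qed
  define B where "B = nat \<lceil>Max (Z ` SS m)\<rceil>"
  have ZB: "Z s \<le> real B" if "s \<in> SS m" for s
  proof -
    have "Z s \<le> Max (Z ` SS m)" using that SS_finite by (intro Max_ge) auto
    thus ?thesis unfolding B_def by linarith
  qed
  have Z0: "Z s \<ge> 0" for s by (simp add: Z_def)
  define r where "r = exp (-1/4::real)"
  have r: "r > 0" "r \<le> 4/5" using exp_quarter_bounds by (auto simp: r_def)
  have pt: "exp (Z s / 4) \<le> (\<Sum>k\<le>B. if Z s \<ge> real k then exp ((real k + 1)/4) else 0)" if s: "s \<in> SS m" for s
  proof -
    define k0 where "k0 = nat \<lfloor>Z s\<rfloor>"
    have k0: "real k0 \<le> Z s" "Z s < real k0 + 1" using Z0[of s] unfolding k0_def by linarith+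
    have k0B: "k0 \<le> B" using ZB[OF s] k0 by linarith
    have "exp (Z s / 4) \<le> exp ((real k0 + 1)/4)" using k0 by simp
    also have "\<dots> = (if Z s \<ge> real k0 then exp ((real k0 + 1)/4) else 0)" using k0 by simp
    also have "\<dots> \<le> (\<Sum>k\<le>B. if Z s \<ge> real k then exp ((real k + 1)/4) else 0)"
      using k0B by (intro member_le_sum) auto
    finally show ?thesis .
  qed
  have "(\<Sum>s\<in>SS m. exp (Z s / 4)) \<le> (\<Sum>s\<in>SS m. \<Sum>k\<le>B. if Z s \<ge> real k then exp ((real k + 1)/4) else 0)"
    using pt by (intro sum_mono) auto
  also have "\<dots> = (\<Sum>k\<le>B. \<Sum>s\<in>SS m. if Z s \<ge> real k then exp ((real k + 1)/4) else 0)"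
    by (rule sum.swap)
  also have "\<dots> = (\<Sum>k\<le>B. exp ((real k + 1)/4) * real (card {s\<in>SS m. Z s \<ge> real k}))"
    using SS_finite by (simp add: sum.If_cases Int_def conj_commute mult.commute)
  also have "\<dots> \<le> (\<Sum>k\<le>B. exp ((real k + 1)/4) * (4 * 2^m * exp (- real k/2)))"
    using ctail_bound[OF assms] by (intro sum_mono mult_left_mono) (auto simp: Z_def)
  also have "\<dots> = (\<Sum>k\<le>B. 4 * 2^m * exp (1/4) * r ^ k)"
  proof (intro sum.cong refl)
    fix k
    have "r ^ k = exp (real k * (-1/4))" unfolding r_def by (simp only: exp_of_nat_mult)
    thus "exp ((real k + 1)/4) * (4 * 2^m * exp (- real k/2)) = 4 * 2^m * exp (1/4) * r ^ k"
      by (simp add: field_simps flip: exp_add)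
  qed
  also have "\<dots> = 4 * 2^m * exp (1/4) * (\<Sum>k<Suc B. r ^ k)"
    by (simp add: sum_distrib_left lessThan_Suc_atMost)
  also have "(\<Sum>k<Suc B. r ^ k) = (1 - r ^ Suc B) / (1 - r)"
    using r by (simp add: sum_gp0 lessThan_Suc_atMost)
  also have "\<dots> \<le> 1 / (1 - r)"
    using r by (intro divide_right_mono) auto
  also have "\<dots> \<le> 5"
    using r by (simp add: field_simps)
  finally have "(\<Sum>s\<in>SS m. exp (Z s / 4)) \<le> 4 * 2^m * exp (1/4) * 5"
    by (simp add: mult_left_mono)
  also have "\<dots> \<le> 4 * 2^m * (4/3) * 5"
    using exp_quarter_bounds by (intro mult_right_mono mult_left_mono) auto
  also have "\<dots> \<le> 27 * 2^m" by simp
  finally show ?thesis by (simp add: Z_def)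
qed

lemma weighted_bound:
  fixes c :: "nat \<Rightarrow> nat \<Rightarrow> complex"
  assumes tau: "(\<Sum>l<n. \<Sum>j<m. (cmod (c l j))^2) > 0"
  shows "real (card {s\<in>SS m. (\<Sum>l<n. (cmod (\<Sum>j<m. complex_of_real (s j) * c l j))^2)
            > t * (\<Sum>l<n. \<Sum>j<m. (cmod (c l j))^2)}) \<le> 27 * 2^m * exp (-t/4)"
proof -
  define \<tau> where "\<tau> = (\<Sum>l<n. \<Sum>j<m. (cmod (c l j))^2)"
  define \<rho> where "\<rho> l = (\<Sum>j<m. (cmod (c l j))^2)" for l
  define Y where "Y s = (\<Sum>l<n. (cmod (\<Sum>j<m. complex_of_real (s j) * c l j))^2)" for s
  define L where "L = {l\<in>{..<n}. \<rho> l > 0}"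
  define Zl where "Zl l s = (cmod (\<Sum>j<m. complex_of_real (s j) * (c l j / complex_of_real (sqrt (\<rho> l)))))^2" for l s
  have t0: "\<tau> > 0" using tau by (simp add: \<tau>_def)
  have rho0: "\<rho> l \<ge> 0" for l by (simp add: \<rho>_def sum_nonneg)
  have finL: "finite L" by (simp add: L_def)
  have tauL: "\<tau> = (\<Sum>l\<in>L. \<rho> l)"
  proof -
    have "\<tau> = (\<Sum>l<n. \<rho> l)" by (simp add: \<tau>_def \<rho>_def)
    also have "\<dots> = (\<Sum>l\<in>L. \<rho> l)"
      unfolding L_def using rho0 by (intro sum.mono_neutral_right) (auto simp: less_le)
    finally show ?thesis .
  qed
  have Lne: "L \<noteq> {}" using tauL t0 by auto
  have czero: "c l j = 0" if "l < n" "l \<notin> L" "j < m" for l j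
  proof -
    have "\<rho> l = 0" using that rho0[of l] by (auto simp: L_def)
    hence "\<forall>j\<in>{..<m}. (cmod (c l j))^2 = 0" unfolding \<rho>_def by (subst (asm) sum_nonneg_eq_0_iff) auto
    thus ?thesis using that by simp
  qed
  have Zl_eq: "(cmod (\<Sum>j<m. complex_of_real (s j) * c l j))^2 = \<rho> l * Zl l s" if "l \<in> L" for l s
  proof -
    have rp: "\<rho> l > 0" using that by (simp add: L_def)
    have "(\<Sum>j<m. complex_of_real (s j) * (c l j / complex_of_real (sqrt (\<rho> l))))
        = (\<Sum>j<m. complex_of_real (s j) * c l j) / complex_of_real (sqrt (\<rho> l))"
      by (simp add: sum_divide_distrib)
    hence "Zl l s = (cmod (\<Sum>j<m. complex_of_real (s j) * c l j))^2 / \<rho> l"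
      using rp by (simp add: Zl_def norm_divide power_divide)
    thus ?thesis using rp by simp
  qed
  have YL: "Y s = (\<Sum>l\<in>L. \<rho> l * Zl l s)" for s
  proof -
    have "Y s = (\<Sum>l\<in>L. (cmod (\<Sum>j<m. complex_of_real (s j) * c l j))^2)"
      unfolding Y_def using czero by (intro sum.mono_neutral_right) (auto simp: L_def)
    also have "\<dots> = (\<Sum>l\<in>L. \<rho> l * Zl l s)" using Zl_eq by simp
    finally show ?thesis .
  qed
  have Zl_unit: "(\<Sum>j<m. (cmod (c l j / complex_of_real (sqrt (\<rho> l))))^2) = 1" if "l \<in> L" for l
  proof -
    have rp: "\<rho> l > 0" using that by (simp add: L_def)
    have "(\<Sum>j<m. (cmod (c l j / complex_of_real (sqrt (\<rho> l))))^2) = (\<Sum>j<m. (cmod (c l j))^2) / \<rho> l"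
      using rp by (simp add: norm_divide power_divide sum_divide_distrib)
    thus ?thesis using rp by (simp add: \<rho>_def)
  qed
  have conv: "exp (1/4 * (Y s / \<tau>)) \<le> (\<Sum>l\<in>L. (\<rho> l / \<tau>) * exp (1/4 * Zl l s))" for s
  proof -
    have "Y s / \<tau> = (\<Sum>l\<in>L. (\<rho> l / \<tau>) *\<^sub>R Zl l s)"
      by (simp add: YL sum_divide_distrib)
    moreover have "exp (1/4 * (\<Sum>l\<in>L. (\<rho> l / \<tau>) *\<^sub>R Zl l s)) \<le> (\<Sum>l\<in>L. (\<rho> l / \<tau>) * exp (1/4 * Zl l s))"
      using convex_on_sum[OF finL Lne convex_on_exp[of "1/4"], of "\<lambda>l. \<rho> l / \<tau>" "\<lambda>l. Zl l s"]
        t0 rho0 tauL by (simp add: sum_divide_distrib[symmetric])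
    ultimately show ?thesis by simp
  qed
  have "real (card {s\<in>SS m. Y s > t * \<tau>}) = (\<Sum>s\<in>{s\<in>SS m. Y s > t * \<tau>}. 1)" by simp
  also have "\<dots> \<le> (\<Sum>s\<in>{s\<in>SS m. Y s > t * \<tau>}. exp (1/4 * (Y s / \<tau>) - t/4))"
  proof (intro sum_mono)
    fix s assume "s \<in> {s\<in>SS m. Y s > t * \<tau>}"
    hence "Y s / \<tau> > t" using t0 by (simp add: field_simps)
    thus "1 \<le> exp (1/4 * (Y s / \<tau>) - t/4)" by simp
  qed
  also have "\<dots> \<le> (\<Sum>s\<in>SS m. exp (1/4 * (Y s / \<tau>) - t/4))"
    by (intro sum_mono2 SS_finite) auto
  also have "\<dots> = exp (-t/4) * (\<Sum>s\<in>SS m. exp (1/4 * (Y s / \<tau>)))"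
    by (simp add: sum_distrib_left flip: exp_add)
  also have "\<dots> \<le> exp (-t/4) * (\<Sum>s\<in>SS m. \<Sum>l\<in>L. (\<rho> l / \<tau>) * exp (1/4 * Zl l s))"
    using conv by (intro mult_left_mono sum_mono) auto
  also have "\<dots> = exp (-t/4) * (\<Sum>l\<in>L. (\<rho> l / \<tau>) * (\<Sum>s\<in>SS m. exp (Zl l s / 4)))"
    by (simp add: sum.swap[of _ "SS m"] sum_distrib_left)
  also have "\<dots> \<le> exp (-t/4) * (\<Sum>l\<in>L. (\<rho> l / \<tau>) * (27 * 2^m))"
    using cmgf_bound[OF Zl_unit] t0 rho0
    by (intro mult_left_mono sum_mono) (auto simp: Zl_def)
  also have "\<dots> = 27 * 2^m * exp (-t/4)"
    using t0 tauL by (simp add: sum_distrib_right[symmetric] sum_divide_distrib[symmetric])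
  finally show ?thesis by (simp add: Y_def \<tau>_def)
qed

lemma weighted_bound':
  fixes c :: "nat \<Rightarrow> nat \<Rightarrow> complex"
  shows "real (card {s\<in>SS m. (\<Sum>l<n. (cmod (\<Sum>j<m. complex_of_real (s j) * c l j))^2)
            > t * (\<Sum>l<n. \<Sum>j<m. (cmod (c l j))^2)}) \<le> 27 * 2^m * exp (-t/4)"
proof (cases "(\<Sum>l<n. \<Sum>j<m. (cmod (c l j))^2) > 0")
  case True thus ?thesis by (rule weighted_bound)
next
  case False
  moreover have "0 \<le> (\<Sum>l<n. \<Sum>j<m. (cmod (c l j))^2)" by (intro sum_nonneg) auto
  ultimately have "(\<Sum>l<n. \<Sum>j<m. (cmod (c l j))^2) = 0" by linarith
  hence "\<forall>l\<in>{..<n}. (\<Sum>j<m. (cmod (c l j))^2) = 0"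
    by (subst (asm) sum_nonneg_eq_0_iff) (auto intro: sum_nonneg)
  hence "\<forall>l\<in>{..<n}. \<forall>j\<in>{..<m}. (cmod (c l j))^2 = 0"
    by (subst (asm) sum_nonneg_eq_0_iff) auto
  hence z: "\<And>l j. l < n \<Longrightarrow> j < m \<Longrightarrow> c l j = 0" by simp
  have "(\<Sum>l<n. (cmod (\<Sum>j<m. complex_of_real (s j) * c l j))^2) = 0" for s
    using z by (intro sum.neutral ballI) (simp add: sum.neutral)
  hence E: "{s\<in>SS m. (\<Sum>l<n. (cmod (\<Sum>j<m. complex_of_real (s j) * c l j))^2)
            > t * (\<Sum>l<n. \<Sum>j<m. (cmod (c l j))^2)} = {}"
    using \<open>(\<Sum>l<n. \<Sum>j<m. (cmod (c l j))^2) = 0\<close> by simp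
  show ?thesis unfolding E by simp
qed


definition ip :: "complex^'n \<Rightarrow> complex^'n \<Rightarrow> complex" where
  "ip a b = (\<Sum>k\<in>UNIV. cnj (a$k) * b$k)"

definition outer :: "complex^'n \<Rightarrow> complex^'n^'n" where
  "outer f = (\<chi> i j. f$i * cnj (f$j))"

definition psd' :: "complex^'n^'n \<Rightarrow> bool" where
  "psd' X \<longleftrightarrow> hermitian_mat X \<and> (\<forall>w. 0 \<le> Re (qform X w))"

lemma herm_entry: "hermitian_mat X \<Longrightarrow> X$i$j = cnj (X$j$i)"
proof -
  assume "hermitian_mat X"
  hence "X$i$j = (cmat_adj X)$i$j" unfolding hermitian_mat_def by simp
  thus ?thesis by (simp add: cmat_adj_def)
qed

lemma herm_iff: "hermitian_mat X \<longleftrightarrow> (\<forall>i j. X$i$j = cnj (X$j$i))"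
proof
  assume "hermitian_mat X" thus "\<forall>i j. X$i$j = cnj (X$j$i)" using herm_entry by blast
next
  assume h: "\<forall>i j. X$i$j = cnj (X$j$i)"
  have "cmat_adj X $ i $ j = X $ i $ j" for i j
    unfolding cmat_adj_def using h[rule_format, of i j] by (simp only: vec_lambda_beta)
  thus "hermitian_mat X" unfolding hermitian_mat_def by (simp add: vec_eq_iff)
qed

lemma qform_ip: "qform X w = ip w (X *v w)"
  by (simp add: qform_def ip_def)

lemma ip_add_left: "ip (a + b) c = ip a c + ip b c"
  by (simp add: ip_def sum.distrib algebra_simps)
lemma ip_add_right: "ip a (b + c) = ip a b + ip a c"
  by (simp add: ip_def sum.distrib algebra_simps)
lemma ip_diff_left: "ip (a - b) c = ip a c - ip b c"
  by (simp add: ip_def sum_subtractf algebra_simps)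
lemma ip_diff_right: "ip a (b - c) = ip a b - ip a c"
  by (simp add: ip_def sum_subtractf algebra_simps)
lemma ip_smult_left: "ip (r *s a) b = cnj r * ip a b"
  by (simp add: ip_def sum_distrib_left algebra_simps)
lemma ip_smult_right: "ip a (r *s b) = r * ip a b"
  by (simp add: ip_def sum_distrib_left algebra_simps)
lemma ip_cnj: "ip b a = cnj (ip a b)"
  by (simp add: ip_def mult.commute)
lemma ip_zero_left [simp]: "ip 0 b = 0" by (simp add: ip_def)
lemma ip_zero_right [simp]: "ip a 0 = 0" by (simp add: ip_def)

lemma norm_vec_sq: "(norm (x::complex^'n))^2 = (\<Sum>i\<in>UNIV. (cmod (x$i))^2)"
  by (simp add: norm_vec_def L2_set_def sum_nonneg)

lemma ip_self: "ip a a = complex_of_real ((norm a)^2)"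
proof -
  have "ip a a = (\<Sum>k\<in>UNIV. complex_of_real ((cmod (a$k))^2))"
    unfolding ip_def by (intro sum.cong refl) (metis complex_norm_square mult.commute of_real_power)
  thus ?thesis by (simp add: norm_vec_sq)
qed

lemma mv_add: "X *v (a + b) = X *v a + X *v b" for X :: "complex^'n^'m"
  by (simp add: matrix_vector_mult_def vec_eq_iff sum.distrib algebra_simps)
lemma mv_diff: "X *v (a - b) = X *v a - X *v b" for X :: "complex^'n^'m"
  by (simp add: matrix_vector_mult_def vec_eq_iff sum_subtractf right_diff_distrib)
lemma mv_smult: "X *v (r *s a) = r *s (X *v a)" for X :: "complex^'n^'m"
  by (simp add: matrix_vector_mult_def vec_eq_iff sum_distrib_left mult.left_commute)
lemma mv_mdiff: "(X - Y) *v a = X *v a - Y *v a" for X :: "complex^'n^'m"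
  by (simp add: matrix_vector_mult_def vec_eq_iff sum_subtractf left_diff_distrib)
lemma mv_madd: "(X + Y) *v a = X *v a + Y *v a" for X :: "complex^'n^'m"
  by (simp add: matrix_vector_mult_def vec_eq_iff sum.distrib algebra_simps)

lemma herm_ip: "hermitian_mat X \<Longrightarrow> ip a (X *v b) = ip (X *v a) b"
proof -
  assume h: "hermitian_mat X"
  have "ip a (X *v b) = (\<Sum>k\<in>UNIV. \<Sum>j\<in>UNIV. cnj (a$k) * X$k$j * b$j)"
    by (simp add: ip_def matrix_vector_mult_def sum_distrib_left mult.assoc)
  also have "\<dots> = (\<Sum>j\<in>UNIV. \<Sum>k\<in>UNIV. cnj (a$k) * X$k$j * b$j)" by (rule sum.swap)
  also have "\<dots> = (\<Sum>j\<in>UNIV. \<Sum>k\<in>UNIV. cnj (X$j$k * a$k) * b$j)"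
    by (intro sum.cong refl) (subst herm_entry[OF h], simp add: mult.commute mult.left_commute)
  also have "\<dots> = ip (X *v a) b"
    by (simp add: ip_def matrix_vector_mult_def sum_distrib_right)
  finally show ?thesis .
qed

lemma herm_qform_real: "hermitian_mat X \<Longrightarrow> Im (qform X w) = 0"
proof -
  assume h: "hermitian_mat X"
  have "qform X w = ip (X *v w) w" by (simp add: qform_ip herm_ip[OF h])
  also have "\<dots> = cnj (ip w (X *v w))" by (rule ip_cnj)
  finally have "qform X w = cnj (qform X w)" by (simp add: qform_ip)
  thus ?thesis by (metis cnj.simps(2) neg_equal_zero)
qed

lemma psd_iff: "psd_mat X \<longleftrightarrow> psd' X"
  unfolding psd_mat_def psd'_def using herm_qform_real by blast

lemma norm_zero_iff_ip: "ip a a = 0 \<longleftrightarrow> a = 0"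
  by (simp add: ip_self)

lemma psd_null:
  assumes h: "hermitian_mat A" and pos: "\<And>w. 0 \<le> Re (qform A w)" and v: "Re (qform A v) = 0"
  shows "A *v v = 0"
proof -
  define u where "u = A *v v"
  define n where "n = (norm u)^2"
  define b where "b = Re (qform A u)"
  have b0: "b \<ge> 0" using pos by (simp add: b_def)
  have n0: "n \<ge> 0" by (simp add: n_def)
  have exp: "Re (qform A (v + complex_of_real t *s u)) = 2 * t * n + t^2 * b" for t
  proof -
    have "qform A (v + complex_of_real t *s u) =
      ip v (A *v v) + complex_of_real t * ip v (A *v u) + complex_of_real t * ip u (A *v v)
      + complex_of_real t * complex_of_real t * ip u (A *v u)"
      by (simp add: qform_ip mv_add mv_smult ip_add_left ip_add_right ip_smult_left ip_smult_right algebra_simps)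
    moreover have "ip v (A *v u) = ip u u"
      using herm_ip[OF h, of v u] by (simp add: u_def ip_cnj[of u u] ip_self)
    moreover have "ip u (A *v v) = ip u u" by (simp add: u_def)
    ultimately have "qform A (v + complex_of_real t *s u) = qform A v + complex_of_real (2 * t * n) + complex_of_real (t^2) * qform A u"
      by (simp add: qform_ip ip_self n_def algebra_simps power2_eq_square)
    thus ?thesis using v by (simp add: b_def)
  qed
  define t where "t = - n / (b + 1)"
  have "0 \<le> 2 * t * n + t^2 * b" using pos[of "v + complex_of_real t *s u"] exp[of t] by simp
  hence "0 \<le> (2 * t * n + t^2 * b) * (b+1)^2" using b0 by simp
  also have "(2 * t * n + t^2 * b) * (b+1)^2 = 2*n*(b+1)*(t*(b+1)) + b*(t*(b+1))^2"
    by (simp add: algebra_simps power2_eq_square)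
  also have "t*(b+1) = -n" using b0 by (simp add: t_def)
  also have "2*n*(b+1)*(-n) + b*(-n)^2 = -(n^2 * (b + 2))"
    by (simp add: algebra_simps power2_eq_square)
  finally have "n^2 * (b+2) \<le> 0" by simp
  hence "n = 0" using b0 n0 by (smt (verit) mult_pos_pos zero_less_power)
  thus ?thesis by (simp add: n_def u_def)
qed

lemma of_real_smult: "complex_of_real r *s w = r *\<^sub>R (w::complex^'n)"
proof -
  have "(complex_of_real r *s w) $ i = (r *\<^sub>R w) $ i" for i
  proof -
    have "(complex_of_real r *s w) $ i = complex_of_real r * w $ i" by simp
    also have "\<dots> = r *\<^sub>R (w $ i)" by (simp add: scaleR_conv_of_real)
    also have "\<dots> = (r *\<^sub>R w) $ i" by simp
    finally show ?thesis .
  qed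
  thus ?thesis by (simp add: vec_eq_iff)
qed

lemma qform_scaleR: "qform X (r *\<^sub>R w) = complex_of_real (r^2) * qform X w"
  by (simp add: qform_ip of_real_smult[symmetric] mv_smult ip_smult_left ip_smult_right power2_eq_square)

lemma qform_zero [simp]: "qform X 0 = 0"
  by (simp add: qform_def)

lemma cont_qform: "continuous_on UNIV (\<lambda>w. Re (qform X w))"
  unfolding qform_def matrix_vector_mult_def by (intro continuous_intros)

lemma max_eig:
  assumes "psd' (X::complex^'n^'n)"
  shows "\<exists>v l. norm v = 1 \<and> X *v v = complex_of_real l *s v \<and> 0 \<le> l \<and> (\<forall>w. Re (qform X w) \<le> l * (norm w)^2)"
proof -
  have h: "hermitian_mat X" and pos: "\<And>w. 0 \<le> Re (qform X w)" using assms by (auto simp: psd'_def)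
  obtain k :: 'n where True by blast
  have "axis k (1::complex) \<noteq> 0" by (simp add: axis_eq_0_iff)
  then obtain a :: "complex^'n" where ax: "a \<noteq> 0" by blast
  have "norm ((1 / norm a) *\<^sub>R a) = 1" using ax by simp
  hence "(1 / norm a) *\<^sub>R a \<in> sphere 0 1" by (simp only: mem_sphere_0)
  hence ne: "sphere (0::complex^'n) 1 \<noteq> {}" by blast
  obtain v where v: "v \<in> sphere 0 1" and vmax: "\<And>y. y \<in> sphere 0 1 \<Longrightarrow> Re (qform X y) \<le> Re (qform X v)"
    using continuous_attains_sup[OF compact_sphere ne continuous_on_subset[OF cont_qform[of X]]] by blast
  define l where "l = Re (qform X v)"
  have nv: "norm v = 1" using v by simp
  have bound: "Re (qform X w) \<le> l * (norm w)^2" for w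
  proof (cases "w = 0")
    case True thus ?thesis by simp
  next
    case False
    hence nw: "norm w > 0" by simp
    have "(1 / norm w) *\<^sub>R w \<in> sphere 0 1" using nw by simp
    hence "Re (qform X ((1 / norm w) *\<^sub>R w)) \<le> l" using vmax l_def by blast
    hence "Re (qform X w) / (norm w)^2 \<le> l" by (simp add: qform_scaleR power_divide)
    thus ?thesis using nw by (simp add: divide_le_eq mult.commute)
  qed
  define A where "A = (\<chi> i j. (if i = j then complex_of_real l else 0) - X$i$j)"
  have Av: "A *v w = complex_of_real l *s w - X *v w" for w
    by (simp add: A_def vec_eq_iff matrix_vector_mult_def left_diff_distrib sum_subtractf if_distrib[of "\<lambda>x. x * _"] cong: if_cong)
  have hA: "hermitian_mat A"
    unfolding herm_iff A_def
  proof (intro allI)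
    fix i j
    have "X$i$j = cnj (X$j$i)" by (rule herm_entry[OF h])
    thus "(\<chi> i j. (if i = j then complex_of_real l else 0) - X$i$j) $ i $ j =
          cnj ((\<chi> i j. (if i = j then complex_of_real l else 0) - X$i$j) $ j $ i)" by simp
  qed
  have qA: "Re (qform A w) = l * (norm w)^2 - Re (qform X w)" for w
    by (simp add: qform_ip Av ip_diff_right ip_smult_right ip_self)
  have "A *v v = 0"
    using psd_null[OF hA] qA bound nv by (simp add: l_def)
  hence "X *v v = complex_of_real l *s v" by (simp add: Av)
  moreover have "0 \<le> l" using pos by (simp add: l_def)
  ultimately show ?thesis using nv bound by blast
qed

lemma outer_mv: "outer f *v w = ip f w *s f"
  by (simp add: outer_def ip_def vec_eq_iff matrix_vector_mult_def sum_distrib_left mult.commute mult.left_commute)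

lemma herm_outer: "hermitian_mat (outer f)"
  unfolding herm_iff outer_def by (simp add: mult.commute)

lemma herm_diff: "hermitian_mat X \<Longrightarrow> hermitian_mat Y \<Longrightarrow> hermitian_mat (X - Y)"
proof -
  assume a: "hermitian_mat X" "hermitian_mat Y"
  have "(X - Y)$i$j = cnj ((X - Y)$j$i)" for i j
    using herm_entry[OF a(1), of i j] herm_entry[OF a(2), of i j] by simp
  thus ?thesis unfolding herm_iff by blast
qed

lemma mv_zero_imp: "(\<And>w. X *v w = 0) \<Longrightarrow> X = (0::complex^'n^'m)"
proof -
  assume h: "\<And>w. X *v w = 0"
  have "X $ i $ j = 0" for i j
  proof -
    have "(X *v axis j 1) $ i = X $ i $ j"
      by (simp add: matrix_vector_mult_def axis_def if_distrib[of "\<lambda>x. _ * x"] cong: if_cong)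
    thus ?thesis using h[of "axis j 1"] by simp
  qed
  thus ?thesis by (simp add: vec_eq_iff)
qed

lemma deflate:
  fixes X :: "complex^'n^'n"
  assumes psd: "psd' X" and nv: "norm v = 1" and ev: "X *v v = complex_of_real l *s v" and lpos: "l > 0"
  defines "f \<equiv> complex_of_real (sqrt l) *s v"
  defines "X' \<equiv> X - outer f"
  shows "psd' X'" "X' *v f = 0" "range (\<lambda>w. X' *v w) \<subseteq> range (\<lambda>w. X *v w)"
        "v \<in> range (\<lambda>w. X *v w)" "v \<notin> range (\<lambda>w. X' *v w)" "f \<in> range (\<lambda>w. X *v w)"
proof -
  have h: "hermitian_mat X" and pos: "\<And>w. 0 \<le> Re (qform X w)" using psd by (auto simp: psd'_def)
  have vv: "ip v v = 1" using nv by (simp add: ip_self)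
  have sl: "complex_of_real (sqrt l) * complex_of_real (sqrt l) = complex_of_real l"
    using lpos by (simp flip: of_real_mult)
  have ipf: "ip f w = complex_of_real (sqrt l) * ip v w" for w
    by (simp add: f_def ip_smult_left)
  have X'mv: "X' *v w = X *v w - ip f w *s f" for w
    by (simp add: X'_def mv_mdiff outer_mv)
  have X'v: "X' *v v = 0"
  proof -
    have ifv: "ip f v = complex_of_real (sqrt l)" by (simp add: ipf vv)
    have "ip f v *s f = complex_of_real (sqrt l) *s f" by (simp only: ifv)
    also have "\<dots> = (complex_of_real (sqrt l) * complex_of_real (sqrt l)) *s v"
      by (simp add: f_def vector_smult_assoc)
    also have "\<dots> = complex_of_real l *s v" using sl by simp
    finally show ?thesis by (simp add: X'mv ev)
  qed
  show "X' *v f = 0" by (simp add: f_def mv_smult X'v)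
  have hX': "hermitian_mat X'" unfolding X'_def by (intro herm_diff h herm_outer)
  show "psd' X'"
    unfolding psd'_def
  proof (intro conjI allI hX')
    fix w
    define a where "a = ip v w"
    define u where "u = w - a *s v"
    have vu: "ip v u = 0" by (simp add: u_def ip_diff_right ip_smult_right vv a_def)
    have uv: "ip u v = 0" using vu by (simp add: ip_cnj[of v u])
    have vXu: "ip v (X *v u) = 0"
      by (simp add: herm_ip[OF h] ev ip_smult_left vu)
    have w: "w = a *s v + u" by (simp add: u_def)
    have "qform X w = cnj a * a * complex_of_real l * ip v v + cnj a * ip v (X *v u)
        + a * complex_of_real l * ip u v + ip u (X *v u)"
      unfolding qform_ip w by (simp add: mv_add mv_smult ev ip_add_left ip_add_right ip_smult_left ip_smult_right vector_smult_assoc algebra_simps)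
    also have "\<dots> = complex_of_real (l * (cmod a)^2) + qform X u"
    proof -
      have na: "a * cnj a = complex_of_real ((cmod a)^2)" by (simp add: complex_mult_cnj cmod_power2)
      show ?thesis by (simp add: vv vXu uv qform_ip na mult.commute mult.left_commute)
    qed
    finally have qX: "Re (qform X w) = l * (cmod a)^2 + Re (qform X u)" by simp
    have "qform (outer f) w = ip f w * cnj (ip f w)"
      by (simp add: qform_ip outer_mv ip_smult_right ip_cnj[of w f] mult.commute)
    also have "\<dots> = complex_of_real ((cmod (ip f w))^2)" by (simp add: complex_mult_cnj cmod_power2)
    finally have qo: "Re (qform (outer f) w) = l * (cmod a)^2"
      using lpos by (simp add: ipf a_def norm_mult power_mult_distrib)
    have "Re (qform X' w) = Re (qform X w) - Re (qform (outer f) w)"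
      by (simp add: qform_ip X'_def mv_mdiff ip_diff_right)
    thus "0 \<le> Re (qform X' w)" using qX qo pos[of u] by simp
  qed
  show "range (\<lambda>w. X' *v w) \<subseteq> range (\<lambda>w. X *v w)"
  proof
    fix y assume "y \<in> range (\<lambda>w. X' *v w)"
    then obtain w where y: "y = X' *v w" by blast
    define c where "c = ip f w * complex_of_real (sqrt l) / complex_of_real l"
    have "X *v (c *s v) = (c * complex_of_real l) *s v" by (simp add: mv_smult ev vector_smult_assoc)
    also have "c * complex_of_real l = ip f w * complex_of_real (sqrt l)" using lpos by (simp add: c_def)
    also have "(ip f w * complex_of_real (sqrt l)) *s v = ip f w *s f" by (simp add: f_def vector_smult_assoc)
    finally have "y = X *v (w - c *s v)" by (simp add: y X'mv mv_diff)
    thus "y \<in> range (\<lambda>w. X *v w)" by blast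
  qed
  have "X *v ((1 / complex_of_real l) *s v) = v" using lpos by (simp add: mv_smult ev vector_smult_assoc)
  thus "v \<in> range (\<lambda>w. X *v w)" by (metis rangeI)
  have "X *v ((complex_of_real (sqrt l) / complex_of_real l) *s v) = f"
    using lpos by (simp add: mv_smult ev vector_smult_assoc f_def)
  thus "f \<in> range (\<lambda>w. X *v w)" by (metis rangeI)
  show "v \<notin> range (\<lambda>w. X' *v w)"
  proof
    assume "v \<in> range (\<lambda>w. X' *v w)"
    then obtain w where w: "X' *v w = v" by (metis rangeE)
    have "ip v v = ip v (X' *v w)" by (simp only: w)
    also have "\<dots> = ip (X' *v v) w" by (rule herm_ip[OF hX'])
    finally show False using vv X'v by simp
  qed
qed

lemma subspace_range_mv: "subspace (range (\<lambda>w. (X::complex^'n^'m) *v w))"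
  by (intro linear_subspace_image matrix_vector_mul_linear subspace_UNIV)

lemma decomp_aux:
  "dim (range (\<lambda>w. X *v w)) = d \<Longrightarrow> psd' (X::complex^'n^'n) \<Longrightarrow>
   \<exists>fs. X = (\<Sum>j<length fs. outer (fs!j)) \<and>
        (\<forall>j<length fs. \<forall>k<length fs. j \<noteq> k \<longrightarrow> ip (fs!j) (fs!k) = 0) \<and>
        (\<forall>j<length fs. fs!j \<in> range (\<lambda>w. X *v w))"
proof (induction d arbitrary: X rule: less_induct)
  case (less d X)
  show ?case
  proof (cases "X = 0")
    case True
    thus ?thesis by (intro exI[of _ "[]"]) simp
  next
    case False
    obtain v l where nv: "norm v = 1" and ev: "X *v v = complex_of_real l *s v" and l0: "0 \<le> l"
      and bd: "\<And>w. Re (qform X w) \<le> l * (norm w)^2"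
      using max_eig[OF less.prems(2)] by blast
    have h: "hermitian_mat X" and pos: "\<And>w. 0 \<le> Re (qform X w)" using less.prems(2) by (auto simp: psd'_def)
    have lpos: "l > 0"
    proof (rule ccontr)
      assume "\<not> l > 0"
      hence "l = 0" using l0 by simp
      hence z: "Re (qform X w) = 0" for w using bd[of w] pos[of w] by simp
      have "X *v w = 0" for w by (rule psd_null[OF h pos z])
      hence "X = 0" by (rule mv_zero_imp)
      thus False using False by simp
    qed
    define f where "f = complex_of_real (sqrt l) *s v"
    define X' where "X' = X - outer f"
    note D = deflate[OF less.prems(2) nv ev lpos, folded f_def, folded X'_def]
    have "span (range (\<lambda>w. X' *v w)) \<subset> span (range (\<lambda>w. X *v w))"
    proof -
      have e1: "span (range (\<lambda>w. X' *v w)) = range (\<lambda>w. X' *v w)" using subspace_range_mv[of X'] by simp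
      have e2: "span (range (\<lambda>w. X *v w)) = range (\<lambda>w. X *v w)" using subspace_range_mv[of X] by simp
      show ?thesis unfolding e1 e2 psubset_eq
      proof
        show "range (\<lambda>w. X' *v w) \<subseteq> range (\<lambda>w. X *v w)" by (rule D(3))
        show "range (\<lambda>w. X' *v w) \<noteq> range (\<lambda>w. X *v w)" using D(4) D(5) by metis
      qed
    qed
    hence "dim (range (\<lambda>w. X' *v w)) < dim (range (\<lambda>w. X *v w))" by (rule eucl.dim_psubset)
    hence dlt: "dim (range (\<lambda>w. X' *v w)) < d" using less.prems(1) by simp
    obtain fs where fs: "X' = (\<Sum>j<length fs. outer (fs!j))"
      and orth: "\<forall>j<length fs. \<forall>k<length fs. j \<noteq> k \<longrightarrow> ip (fs!j) (fs!k) = 0"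
      and rng: "\<forall>j<length fs. fs!j \<in> range (\<lambda>w. X' *v w)"
      using less.IH[OF dlt refl D(1)] by blast
    have hX': "hermitian_mat X'" using D(1) unfolding psd'_def by (rule conjunct1)
    have fo: "ip f g = 0" if "g \<in> range (\<lambda>w. X' *v w)" for g
    proof -
      from that obtain w where w: "g = X' *v w" by (rule rangeE)
      have "ip f g = ip f (X' *v w)" by (simp only: w)
      also have "\<dots> = ip (X' *v f) w" by (rule herm_ip[OF hX'])
      finally show ?thesis using D(2) by simp
    qed
    show ?thesis
    proof (intro exI[of _ "f # fs"] conjI allI impI)
      have "(\<Sum>j<length (f # fs). outer ((f # fs)!j)) = outer f + (\<Sum>j<length fs. outer (fs!j))"
        by (simp only: length_Cons sum.lessThan_Suc_shift nth_Cons_0 nth_Cons_Suc)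
      also have "\<dots> = outer f + X'" using fs by simp
      also have "\<dots> = X" by (simp add: X'_def)
      finally show "X = (\<Sum>j<length (f # fs). outer ((f # fs)!j))" by simp
    next
      fix j k assume j: "j < length (f # fs)" and k: "k < length (f # fs)" and jk: "j \<noteq> k"
      show "ip ((f # fs)!j) ((f # fs)!k) = 0"
      proof (cases j)
        case 0
        then obtain k' where "k = Suc k'" using jk by (cases k) auto
        thus ?thesis using 0 k fo rng by simp
      next
        case (Suc j')
        show ?thesis
        proof (cases k)
          case 0
          have "ip f (fs!j') = 0" using fo rng Suc j by simp
          thus ?thesis using Suc 0 by (simp add: ip_cnj[of f "fs!j'"])
        next
          case (Suc k')
          thus ?thesis using \<open>j = Suc j'\<close> j k jk orth by simp
        qed
      qed
    next
      fix j assume j: "j < length (f # fs)"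
      show "(f # fs)!j \<in> range (\<lambda>w. X *v w)"
        using D(3,6) rng j by (cases j) auto
    qed
  qed
qed

lemma decomp:
  assumes "psd' (X::complex^'n^'n)"
  shows "\<exists>fs. X = (\<Sum>j<length fs. outer (fs!j)) \<and>
        (\<forall>j<length fs. \<forall>k<length fs. j \<noteq> k \<longrightarrow> ip (fs!j) (fs!k) = 0)"
  using decomp_aux[OF refl assms] by blast

lemma ip_sum_right: "ip a (\<Sum>j\<in>S. F j) = (\<Sum>j\<in>S. ip a (F j))"
  by (simp add: ip_def sum_distrib_left sum_component) (rule sum.swap)

lemma mv_sum: "(\<Sum>j\<in>S. F j) *v (w::complex^'n) = (\<Sum>j\<in>S. F j *v w)"
  for F :: "'a \<Rightarrow> complex^'n^'m"
  by (simp add: matrix_vector_mult_def vec_eq_iff sum_component sum_distrib_right) (intro allI sum.swap)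

lemma qform_outer: "qform (outer g) w = complex_of_real ((cmod (ip g w))^2)"
proof -
  have "qform (outer g) w = ip g w * cnj (ip g w)"
    by (simp add: qform_ip outer_mv ip_smult_right ip_cnj[of w g] mult.commute)
  also have "\<dots> = complex_of_real ((cmod (ip g w))^2)" by (simp add: complex_mult_cnj cmod_power2)
  finally show ?thesis .
qed

lemma qform_sum_outer:
  "Re (qform (\<Sum>l<n. outer (g l)) w) = (\<Sum>l<n. (cmod (ip (g l) w))^2)" for n :: nat
  by (simp add: qform_ip mv_sum ip_sum_right qform_outer[unfolded qform_ip] Re_sum)

lemma ctrace_mult_sum_outer:
  "ctrace (H ** (\<Sum>j<m. outer (f j))) = (\<Sum>j<m. qform H (f j))" for m :: nat
proof -
  have "ctrace (H ** (\<Sum>j<m. outer (f j))) = (\<Sum>i\<in>UNIV. \<Sum>k\<in>UNIV. \<Sum>j<m. H$i$k * ((f j)$k * cnj ((f j)$i)))"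
    by (simp add: ctrace_def matrix_matrix_mult_def sum_component outer_def sum_distrib_left)
  also have "\<dots> = (\<Sum>j<m. \<Sum>i\<in>UNIV. \<Sum>k\<in>UNIV. H$i$k * ((f j)$k * cnj ((f j)$i)))"
    by (simp add: sum.swap[of _ "{..<m}"])
  also have "\<dots> = (\<Sum>j<m. qform H (f j))"
    by (simp add: qform_def matrix_vector_mult_def sum_distrib_left mult.commute mult.left_commute)
  finally show ?thesis .
qed

lemma ctrace_sum_outer: "Re (ctrace (\<Sum>j<m. outer (f j))) = (\<Sum>j<m. (norm (f j))^2)" for m :: nat
proof -
  have "Re (ctrace (\<Sum>j<m. outer (f j))) = (\<Sum>i\<in>UNIV. \<Sum>j<m. Re ((f j)$i * cnj ((f j)$i)))"
    by (simp add: ctrace_def sum_component outer_def Re_sum)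
  also have "\<dots> = (\<Sum>j<m. \<Sum>i\<in>UNIV. (cmod ((f j)$i))^2)"
    by (subst sum.swap) (simp add: complex_mult_cnj cmod_power2)
  also have "\<dots> = (\<Sum>j<m. (norm (f j))^2)" by (simp add: norm_vec_sq)
  finally show ?thesis .
qed

lemma ip_comb: "ip g (\<Sum>j<m. s j *\<^sub>R f j) = (\<Sum>j<m. complex_of_real (s j) * ip g (f j))" for m :: nat
  by (simp add: ip_sum_right of_real_smult[symmetric] ip_smult_right)

lemma norm_comb:
  fixes m :: nat
  assumes orth: "\<And>j k. j < m \<Longrightarrow> k < m \<Longrightarrow> j \<noteq> k \<Longrightarrow> ip (f j) (f k) = 0"
  shows "(norm (\<Sum>j<m. s j *\<^sub>R f j))^2 = (\<Sum>j<m. (s j)^2 * (norm (f j))^2)"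
proof -
  have "complex_of_real ((norm (\<Sum>j<m. s j *\<^sub>R f j))^2) = ip (\<Sum>j<m. s j *\<^sub>R f j) (\<Sum>j<m. s j *\<^sub>R f j)"
    by (simp add: ip_self)
  also have "\<dots> = (\<Sum>k<m. complex_of_real (s k) * ip (\<Sum>j<m. s j *\<^sub>R f j) (f k))"
    by (rule ip_comb)
  also have "\<dots> = (\<Sum>k<m. complex_of_real (s k) * (\<Sum>j<m. complex_of_real (s j) * ip (f j) (f k)))"
  proof (intro sum.cong refl)
    fix k
    have "ip (\<Sum>j<m. s j *\<^sub>R f j) (f k) = cnj (ip (f k) (\<Sum>j<m. s j *\<^sub>R f j))" by (rule ip_cnj)
    also have "\<dots> = (\<Sum>j<m. complex_of_real (s j) * ip (f j) (f k))"
      by (simp add: ip_comb ip_cnj[of "f k"])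
    finally show "complex_of_real (s k) * ip (\<Sum>j<m. s j *\<^sub>R f j) (f k) = complex_of_real (s k) * (\<Sum>j<m. complex_of_real (s j) * ip (f j) (f k))" by simp
  qed
  also have "\<dots> = (\<Sum>k<m. complex_of_real (s k) * (complex_of_real (s k) * ip (f k) (f k)))"
  proof (intro sum.cong refl)
    fix k assume k: "k \<in> {..<m}"
    have "(\<Sum>j<m. complex_of_real (s j) * ip (f j) (f k)) = complex_of_real (s k) * ip (f k) (f k)"
    proof -
      have "(\<Sum>j<m. complex_of_real (s j) * ip (f j) (f k)) = complex_of_real (s k) * ip (f k) (f k)
          + (\<Sum>j\<in>{..<m}-{k}. complex_of_real (s j) * ip (f j) (f k))"
        using k by (intro sum.remove) auto
      also have "(\<Sum>j\<in>{..<m}-{k}. complex_of_real (s j) * ip (f j) (f k)) = 0"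
        using k orth by (intro sum.neutral) auto
      finally show ?thesis by simp
    qed
    thus "complex_of_real (s k) * (\<Sum>j<m. complex_of_real (s j) * ip (f j) (f k)) = complex_of_real (s k) * (complex_of_real (s k) * ip (f k) (f k))" by simp
  qed
  also have "\<dots> = complex_of_real (\<Sum>j<m. (s j)^2 * (norm (f j))^2)"
    by (simp add: ip_self power2_eq_square mult.assoc)
  finally show ?thesis by (simp only: of_real_eq_iff)
qed

lemma rank_pos: "(H::complex^'n^'n) \<noteq> 0 \<Longrightarrow> rank H \<ge> 1"
proof (rule ccontr)
  assume H: "H \<noteq> 0" and "\<not> rank H \<ge> 1"
  hence "vec.dim (rows H) = 0" unfolding row_rank_def_gen by linarith
  hence "rows H \<subseteq> {0}" by (simp only: vec.dim_eq_0)
  hence "row i H = 0" for i unfolding rows_def by blast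
  hence "H $ i $ j = 0" for i j by (metis row_def vec_lambda_beta zero_index)
  hence "H = 0" by (simp add: vec_eq_iff)
  thus False using H by simp
qed

lemma rank_zero: "rank (0::complex^'n^'m) = 0"
proof -
  have "rows (0::complex^'n^'m) \<subseteq> {0}" by (auto simp: rows_def row_def vec_eq_iff)
  hence "vec.dim (rows (0::complex^'n^'m)) = 0" by (simp only: vec.dim_eq_0)
  thus ?thesis by (simp add: row_rank_def_gen)
qed

lemma rounding:
  fixes H :: "nat \<Rightarrow> complex^'n^'n" and X :: "complex^'n^'n" and I :: "nat set"
  assumes Hpsd: "\<forall>i\<in>I. psd' (H i)" and fin: "finite I" and Xpsd: "psd' X"
    and Kb: "real (card {i\<in>I. H i \<noteq> 0}) \<le> K" and Kpos: "K > 0"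
  shows "\<exists>w. (norm w)^2 = Re (ctrace X) \<and>
             (\<forall>i\<in>I. Re (qform (H i) w) \<le> 4 * ln (100 * K) * Re (ctrace (H i ** X)))"
proof -
  obtain fs where Xd: "X = (\<Sum>j<length fs. outer (fs!j))"
    and orth: "\<forall>j<length fs. \<forall>k<length fs. j \<noteq> k \<longrightarrow> ip (fs!j) (fs!k) = 0"
    using decomp[OF Xpsd] by blast
  define m where "m = length fs"
  define F where "F j = fs ! j" for j
  have Xd': "X = (\<Sum>j<m. outer (F j))" using Xd by (simp add: m_def F_def)
  have "\<forall>i\<in>I. \<exists>gs. H i = (\<Sum>l<length gs. outer (gs!l))"
    using Hpsd decomp by blast
  from bchoice[OF this] obtain G where G: "\<forall>i\<in>I. H i = (\<Sum>l<length (G i). outer (G i ! l))"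
    by blast
  define t where "t = 4 * ln (100 * K)"
  define c where "c i l j = ip (G i ! l) (F j)" for i l j
  define w where "w s = (\<Sum>j<m. s j *\<^sub>R F j)" for s
  define \<tau> where "\<tau> i = Re (ctrace (H i ** X))" for i
  define Y where "Y i s = Re (qform (H i) (w s))" for i s
  have \<tau>eq: "\<tau> i = (\<Sum>l<length (G i). \<Sum>j<m. (cmod (c i l j))^2)" if i: "i \<in> I" for i
  proof -
    have "\<tau> i = (\<Sum>j<m. Re (qform (H i) (F j)))"
      by (simp add: \<tau>_def Xd' ctrace_mult_sum_outer Re_sum)
    also have "\<dots> = (\<Sum>j<m. \<Sum>l<length (G i). (cmod (c i l j))^2)"
    proof (intro sum.cong refl)
      fix j
      have "Re (qform (H i) (F j)) = Re (qform (\<Sum>l<length (G i). outer (G i ! l)) (F j))"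
        using G i by simp
      also have "\<dots> = (\<Sum>l<length (G i). (cmod (c i l j))^2)"
        by (simp add: qform_sum_outer c_def)
      finally show "Re (qform (H i) (F j)) = (\<Sum>l<length (G i). (cmod (c i l j))^2)" .
    qed
    also have "\<dots> = (\<Sum>l<length (G i). \<Sum>j<m. (cmod (c i l j))^2)" by (rule sum.swap)
    finally show ?thesis .
  qed
  have Yeq: "Y i s = (\<Sum>l<length (G i). (cmod (\<Sum>j<m. complex_of_real (s j) * c i l j))^2)"
    if i: "i \<in> I" for i s
  proof -
    have "Y i s = Re (qform (\<Sum>l<length (G i). outer (G i ! l)) (w s))"
      using G i by (simp add: Y_def)
    also have "\<dots> = (\<Sum>l<length (G i). (cmod (ip (G i ! l) (w s)))^2)"
      by (rule qform_sum_outer)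
    also have "\<dots> = (\<Sum>l<length (G i). (cmod (\<Sum>j<m. complex_of_real (s j) * c i l j))^2)"
      by (simp add: w_def ip_comb c_def)
    finally show ?thesis .
  qed
  define Bad where "Bad i = {s\<in>SS m. Y i s > t * \<tau> i}" for i
  have bad_bound: "real (card (Bad i)) \<le> 27 * 2^m * exp (-t/4)" if i: "i \<in> I" for i
    unfolding Bad_def Yeq[OF i] \<tau>eq[OF i] by (rule weighted_bound')
  have bad_zero: "Bad i = {}" if "H i = 0" for i
  proof -
    have "Y i s = 0" for s by (simp add: Y_def that qform_def)
    moreover have "\<tau> i = 0" by (simp add: \<tau>_def that ctrace_def matrix_matrix_mult_def)
    ultimately show ?thesis by (simp add: Bad_def)
  qed
  define NZ where "NZ = {i\<in>I. H i \<noteq> 0}"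
  have finNZ: "finite NZ" using fin by (simp add: NZ_def)
  have e: "exp (-t/4) = 1 / (100 * K)"
    using Kpos by (simp add: t_def exp_minus exp_ln inverse_eq_divide)
  have "real (card (\<Union>i\<in>I. Bad i)) \<le> real (\<Sum>i\<in>I. card (Bad i))"
    using card_UN_le[OF fin, of Bad] by linarith
  also have "\<dots> = (\<Sum>i\<in>I. real (card (Bad i)))" by simp
  also have "\<dots> = (\<Sum>i\<in>NZ. real (card (Bad i)))"
    using fin bad_zero by (intro sum.mono_neutral_right) (auto simp: NZ_def)
  also have "\<dots> \<le> (\<Sum>i\<in>NZ. 27 * 2^m * exp (-t/4))"
    using bad_bound by (intro sum_mono) (auto simp: NZ_def)
  also have "\<dots> = real (card NZ) * (27 * 2^m / (100 * K))" unfolding e by simp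
  also have "\<dots> \<le> K * (27 * 2^m / (100 * K))"
    using Kb Kpos by (intro mult_right_mono) (auto simp: NZ_def)
  also have "\<dots> = 27 * 2^m / 100" using Kpos by simp
  also have "\<dots> < 2^m" by simp
  finally have lt: "real (card (\<Union>i\<in>I. Bad i)) < 2^m" .
  have "\<not> SS m \<subseteq> (\<Union>i\<in>I. Bad i)"
  proof
    assume "SS m \<subseteq> (\<Union>i\<in>I. Bad i)"
    hence "card (SS m) \<le> card (\<Union>i\<in>I. Bad i)"
      using fin by (intro card_mono) (auto simp: Bad_def SS_finite)
    thus False using lt SS_card[of m] by simp
  qed
  then obtain s where s: "s \<in> SS m" and nb: "\<And>i. i \<in> I \<Longrightarrow> s \<notin> Bad i" by blast
  show ?thesis
  proof (intro exI[of _ "w s"] conjI ballI)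
    have "(norm (w s))^2 = (\<Sum>j<m. (s j)^2 * (norm (F j))^2)"
      unfolding w_def by (rule norm_comb) (use orth in \<open>auto simp: F_def m_def\<close>)
    also have "\<dots> = (\<Sum>j<m. (norm (F j))^2)" using SS_sq[OF s] by simp
    also have "\<dots> = Re (ctrace X)" by (simp add: Xd' ctrace_sum_outer)
    finally show "(norm (w s))^2 = Re (ctrace X)" .
  next
    fix i assume i: "i \<in> I"
    have "\<not> Y i s > t * \<tau> i" using nb[OF i] s by (simp add: Bad_def)
    thus "Re (qform (H i) (w s)) \<le> 4 * ln (100 * K) * Re (ctrace (H i ** X))"
      by (simp add: Y_def \<tau>_def t_def)
  qed
qed

lemma beta_round:
  fixes \<beta> :: "nat \<Rightarrow> real" and M Q :: nat
  assumes sumb: "(\<Sum>i=1..M. \<beta> i) = real Q" and b01: "\<forall>i\<in>{1..M}. 0 \<le> \<beta> i \<and> \<beta> i \<le> 1"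
    and Q: "1 \<le> Q" "Q \<le> M - 1"
  shows "\<exists>S. S \<subseteq> {1..M} \<and> card S = Q \<and> (\<forall>i\<in>S. \<beta> i \<ge> 1 / (real M - real Q + 1))"
proof -
  define D where "D = real M - real Q + 1"
  have QM: "Q < M" using Q by linarith
  have D1: "D \<ge> 2" using QM by (simp add: D_def)
  define T where "T = {i\<in>{1..M}. \<beta> i \<ge> 1 / D}"
  have finT: "finite T" by (simp add: T_def)
  have "card T \<ge> Q"
  proof (rule ccontr)
    assume "\<not> card T \<ge> Q"
    hence kQ: "card T \<le> Q - 1" by simp
    define R where "R = {1..M} - T"
    have TR: "T \<subseteq> {1..M}" by (auto simp: T_def)
    have cR: "card R = M - card T" using TR by (simp add: R_def card_Diff_subset finT)
    have Rne: "R \<noteq> {}"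
    proof
      assume "R = {}"
      hence "M - card T = 0" using cR by simp
      thus False using kQ QM by linarith
    qed
    have "(\<Sum>i\<in>{1..M}. \<beta> i) = (\<Sum>i\<in>{1..M}-T. \<beta> i) + (\<Sum>i\<in>T. \<beta> i)"
      by (rule sum.subset_diff[OF TR]) simp
    hence "real Q = (\<Sum>i\<in>T. \<beta> i) + (\<Sum>i\<in>R. \<beta> i)"
      using sumb by (simp add: R_def)
    also have "(\<Sum>i\<in>T. \<beta> i) \<le> (\<Sum>i\<in>T. 1)"
      using b01 TR by (intro sum_mono) auto
    also have "(\<Sum>i\<in>R. \<beta> i) < (\<Sum>i\<in>R. 1 / D)"
      using Rne by (intro sum_strict_mono) (auto simp: R_def T_def)
    finally have lt: "real Q < real (card T) + real (card R) / D" by simp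
    have cR': "real (card R) = real M - real (card T)" using cR TR card_mono[OF _ TR] by simp
    have "real (card T) + real (card R) / D \<le> real Q"
    proof -
      have kQ': "real (card T) \<le> real Q - 1" using kQ Q by linarith
      have "(real M - real Q) * (real (card T) - real Q + 1) \<le> 0"
        using kQ' QM by (intro mult_nonneg_nonpos) auto
      hence "real (card T) * D + (real M - real (card T)) \<le> real Q * D"
        by (simp add: D_def algebra_simps)
      thus ?thesis using D1 by (simp add: cR' field_simps)
    qed
    thus False using lt by simp
  qed
  then obtain S where "S \<subseteq> T" "card S = Q" by (meson obtain_subset_with_card_n)
  thus ?thesis by (intro exI[of _ S]) (auto simp: T_def D_def)
qed

theorem theorem3p4:
  fixes H :: "nat \<Rightarrow> complex^'n^'n"
    and M Q :: nat and \<epsilon> :: real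
  assumes "CARD('n) \<ge> 2" and "M \<ge> 2"
    and "1 \<le> Q" and "Q \<le> M - 1"
    and "0 < \<epsilon>" and "\<epsilon> < 1"
    and "\<forall>i\<in>{1..M}. psd_mat (H i)"
  shows "v_QP M Q \<epsilon> H \<ge>
    ereal ((\<epsilon> / (1 - (1 - \<epsilon>) / (real M - real Q + 1))) *
           (1 / (4 * ln (100 * (\<Sum>i=1..M. min (real (rank (H i))) (sqrt (real M)))))))
    * v_SDP M Q \<epsilon> H"
proof -
  define K where "K = (\<Sum>i=1..M. min (real (rank (H i))) (sqrt (real M)))"
  define D where "D = real M - real Q + 1"
  define ct where "ct = 1 - (1 - \<epsilon>) / D"
  define \<alpha> where "\<alpha> = \<epsilon> / ct"
  define cc where "cc = \<alpha> * (1 / (4 * ln (100 * K)))"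
  have Hpsd: "\<forall>i\<in>{1..M}. psd' (H i)" using assms(7) psd_iff by blast
  have QM: "Q < M" using assms(3,4) by linarith
  have D2: "D \<ge> 2" using QM by (simp add: D_def)
  have e0: "0 < \<epsilon>" "\<epsilon> < 1" using assms(5,6) by auto
  have "(1 - \<epsilon>) / D \<le> (1 - \<epsilon>) / 1" using D2 e0 by (intro divide_left_mono) auto
  hence ct_ge: "\<epsilon> \<le> ct" by (simp add: ct_def)
  have ctpos: "ct > 0" using ct_ge e0 by simp
  have a0: "0 < \<alpha>" using ctpos e0 by (simp add: \<alpha>_def)
  have a1: "\<alpha> \<le> 1" using ct_ge ctpos by (simp add: \<alpha>_def)
  have aeps: "\<alpha> * ct = \<epsilon>" using ctpos by (simp add: \<alpha>_def)
  define \<beta>0 where "\<beta>0 i = (if i \<in> {1..Q} then 1 else 0::real)" for i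
  have sum\<beta>0: "(\<Sum>i=1..M. \<beta>0 i) = real Q"
  proof -
    have "(\<Sum>i=1..M. \<beta>0 i) = (\<Sum>i\<in>{1..Q}. 1)"
      using QM by (intro sum.mono_neutral_cong_right) (auto simp: \<beta>0_def)
    thus ?thesis by simp
  qed
  have QPnn: "0 \<le> v_QP M Q \<epsilon> H"
    unfolding v_QP_def
    by (rule SUP_upper2[of "(0, \<beta>0)"]) (use e0 sum\<beta>0 in \<open>auto simp: \<beta>0_def\<close>)
  have Knn: "K \<ge> 0" unfolding K_def by (intro sum_nonneg) auto
  have eqc: "(\<epsilon> / (1 - (1 - \<epsilon>) / (real M - real Q + 1))) *
           (1 / (4 * ln (100 * (\<Sum>i=1..M. min (real (rank (H i))) (sqrt (real M)))))) = cc"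
    by (simp add: cc_def \<alpha>_def ct_def D_def K_def)
  have main: "ereal cc * v_SDP M Q \<epsilon> H \<le> v_QP M Q \<epsilon> H"
  proof (cases "K > 0")
    case False
    hence "K = 0" using Knn by simp
    hence "cc = 0" by (simp add: cc_def)
    hence z: "ereal cc * v_SDP M Q \<epsilon> H = 0" by (simp add: zero_ereal_def[symmetric])
    show ?thesis unfolding z by (rule QPnn)
  next
    case True
    define NZ where "NZ = {i\<in>{1..M}. H i \<noteq> 0}"
    have "real (card NZ) = (\<Sum>i\<in>NZ. 1)" by simp
    also have "\<dots> \<le> (\<Sum>i\<in>NZ. min (real (rank (H i))) (sqrt (real M)))"
    proof (intro sum_mono)
      fix i assume "i \<in> NZ"
      hence "rank (H i) \<ge> 1" by (intro rank_pos) (simp add: NZ_def)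
      moreover have "sqrt (real M) \<ge> 1" using assms(2) by simp
      ultimately show "1 \<le> min (real (rank (H i))) (sqrt (real M))" by simp
    qed
    also have "\<dots> \<le> K" unfolding K_def by (intro sum_mono2) (auto simp: NZ_def)
    finally have Kb: "real (card NZ) \<le> K" .
    have "NZ \<noteq> {}"
    proof
      assume "NZ = {}"
      hence "H i = 0" if "i \<in> {1..M}" for i using that by (auto simp: NZ_def)
      hence "K = 0" unfolding K_def by (intro sum.neutral) (auto simp: rank_zero)
      thus False using True by simp
    qed
    hence "card NZ \<ge> 1" by (simp add: NZ_def Suc_le_eq card_gt_0_iff)
    hence K1: "K \<ge> 1" using Kb by linarith
    define t where "t = 4 * ln (100 * K)"
    have tpos: "t > 0" using K1 by (simp add: t_def)
    have cc0: "cc \<ge> 0" using a0 tpos by (simp add: cc_def t_def[symmetric])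
    define Feas where "Feas = {(X :: complex^'n^'n, \<beta> :: nat \<Rightarrow> real).
        psd_mat X \<and>
        (\<forall>i\<in>{1..M}. Re (ctrace (H i ** X)) \<le> \<beta> i * \<epsilon> + (1 - \<beta> i)) \<and>
        (\<Sum>i=1..M. \<beta> i) = real Q \<and>
        (\<forall>i\<in>{1..M}. 0 \<le> \<beta> i \<and> \<beta> i \<le> 1)}"
    have SDP: "v_SDP M Q \<epsilon> H = (SUP p\<in>Feas. ereal (Re (ctrace (fst p))))"
      by (simp add: v_SDP_def Feas_def)
    have trnn: "0 \<le> Re (ctrace X)" if Xp: "psd' X" for X :: "complex^'n^'n"
    proof -
      obtain fs where "X = (\<Sum>j<length fs. outer (fs!j))" using decomp[OF Xp] by blast
      thus ?thesis by (simp add: ctrace_sum_outer sum_nonneg)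
    qed
    have Fne: "Feas \<noteq> {}"
    proof -
      have "psd_mat (0::complex^'n^'n)" by (simp add: psd_iff psd'_def herm_iff qform_def)
      moreover have "Re (ctrace (H i ** 0)) = 0" for i by (simp add: ctrace_def matrix_matrix_mult_def)
      ultimately have "(0, \<beta>0) \<in> Feas" using e0 sum\<beta>0 by (auto simp: Feas_def \<beta>0_def)
      thus ?thesis by blast
    qed
    have key: "ereal cc * ereal (Re (ctrace (fst p))) \<le> v_QP M Q \<epsilon> H" if p: "p \<in> Feas" for p
    proof -
      obtain X \<beta> where pXb: "p = (X, \<beta>)" by (cases p)
      have Xp: "psd' X" and cons: "\<forall>i\<in>{1..M}. Re (ctrace (H i ** X)) \<le> \<beta> i * \<epsilon> + (1 - \<beta> i)"
        and sb: "(\<Sum>i=1..M. \<beta> i) = real Q" and b01: "\<forall>i\<in>{1..M}. 0 \<le> \<beta> i \<and> \<beta> i \<le> 1"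
        using p by (auto simp: Feas_def pXb psd_iff)
      obtain w where wn: "(norm w)^2 = Re (ctrace X)"
        and wc: "\<forall>i\<in>{1..M}. Re (qform (H i) w) \<le> t * Re (ctrace (H i ** X))"
        using rounding[OF Hpsd _ Xp, of K] Kb True by (auto simp: NZ_def t_def)
      obtain S where SM: "S \<subseteq> {1..M}" and cS: "card S = Q"
        and Sb: "\<forall>i\<in>S. \<beta> i \<ge> 1 / D"
        using beta_round[OF sb b01 assms(3,4)] by (auto simp: D_def)
      define \<beta>' where "\<beta>' i = (if i \<in> S then 1 else 0::real)" for i
      define w' where "w' = sqrt (\<alpha> / t) *\<^sub>R w"
      have sq: "(sqrt (\<alpha> / t))^2 = \<alpha> / t" using a0 tpos by simp
      have qw': "Re (qform (H i) w') = \<alpha> / t * Re (qform (H i) w)" for i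
        by (simp add: w'_def qform_scaleR sq)
      have feas': "(w', \<beta>') \<in> {(w :: complex^'n, \<beta> :: nat \<Rightarrow> real).
        (\<forall>i\<in>{1..M}. \<beta> i \<in> {0, 1}) \<and>
        (\<forall>i\<in>{1..M}. Re (qform (H i) w) \<le> \<beta> i * \<epsilon> + (1 - \<beta> i)) \<and>
        (\<Sum>i=1..M. \<beta> i) = real Q}"
      proof -
        have "Re (qform (H i) w') \<le> \<beta>' i * \<epsilon> + (1 - \<beta>' i)" if i: "i \<in> {1..M}" for i
        proof -
          have "Re (qform (H i) w') \<le> \<alpha> / t * (t * Re (ctrace (H i ** X)))"
            unfolding qw' using wc i a0 tpos by (intro mult_left_mono) auto
          also have "\<dots> = \<alpha> * Re (ctrace (H i ** X))" using tpos by simp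
          finally have le: "Re (qform (H i) w') \<le> \<alpha> * Re (ctrace (H i ** X))" .
          show ?thesis
          proof (cases "i \<in> S")
            case True
            have "\<beta> i * \<epsilon> + (1 - \<beta> i) = 1 - \<beta> i * (1 - \<epsilon>)" by (simp add: algebra_simps)
            also have "\<dots> \<le> 1 - (1 / D) * (1 - \<epsilon>)"
              using Sb True e0 by (intro diff_left_mono mult_right_mono) auto
            also have "\<dots> = ct" by (simp add: ct_def)
            finally have "Re (ctrace (H i ** X)) \<le> ct" using cons i by fastforce
            hence "\<alpha> * Re (ctrace (H i ** X)) \<le> \<alpha> * ct" using a0 by (intro mult_left_mono) auto
            thus ?thesis using le aeps True by (simp add: \<beta>'_def)
          next
            case False
            have bi: "0 \<le> \<beta> i" using b01 i by auto
            have "\<beta> i * \<epsilon> \<le> \<beta> i * 1" using bi e0 by (intro mult_left_mono) auto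
            hence "\<beta> i * \<epsilon> + (1 - \<beta> i) \<le> 1" by simp
            hence "Re (ctrace (H i ** X)) \<le> 1" using cons i by fastforce
            hence "\<alpha> * Re (ctrace (H i ** X)) \<le> \<alpha> * 1" using a0 by (intro mult_left_mono) auto
            thus ?thesis using le a1 False by (simp add: \<beta>'_def)
          qed
        qed
        moreover have "(\<Sum>i=1..M. \<beta>' i) = real Q"
        proof -
          have "(\<Sum>i=1..M. \<beta>' i) = (\<Sum>i\<in>S. 1)"
            using SM by (intro sum.mono_neutral_cong_right) (auto simp: \<beta>'_def)
          thus ?thesis using cS by simp
        qed
        ultimately show ?thesis by (auto simp: \<beta>'_def)
      qed
      have "(norm w')^2 = \<alpha> / t * Re (ctrace X)"
        using a0 tpos by (simp add: w'_def power_mult_distrib wn)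
      also have "\<dots> = cc * Re (ctrace (fst p))" by (simp add: cc_def t_def pXb)
      finally have nw: "ereal cc * ereal (Re (ctrace (fst p))) = ereal ((norm (fst (w', \<beta>')))^2)" by simp
      show ?thesis unfolding nw v_QP_def
        by (rule SUP_upper[OF feas'])
    qed
    have "ereal cc * v_SDP M Q \<epsilon> H = (SUP p\<in>Feas. ereal cc * ereal (Re (ctrace (fst p))))"
      unfolding SDP using Fne trnn cc0
      by (intro SUP_ereal_mult_left[symmetric]) (auto simp: Feas_def psd_iff)
    also have "\<dots> \<le> v_QP M Q \<epsilon> H" using key by (intro SUP_least) auto
    finally show ?thesis .
  qed
  show ?thesis unfolding eqc by (rule main)
qed

end
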